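(* Let $G$ be a maximal triangle-free graph satisfying property $\mathscr{D}_3$. If $G$ contains an induced cycle of length six, then $G$ contains the Mycielski–Grötzsch graph $\Upsilon$ as a subgraph.
   Context: A graph is maximal triangle-free if it contains no triangle but adding any new edge creates a triangle. Property $\mathscr{D}_k$: for every $m\in\{1,\dots,k\}$ and every sequence $x_1,\dots,x_{3m}$ of (not necessarily distinct) vertices there is a vertex $y$ with $|\{i\in[3m]: x_iy\in E(G)\}|\ge m+1$. Mycielski–Grötzsch graph $\Upsilon$: vertices $a_j,b_j$ ($j\in\mathbb Z/5\mathbb Z$) and $c$; edges all pairs $a_jc$, $a_jb_{j\pm2}$, $b_jb_{j+2}$. *)

theory Defs
  imports Main
begin

definition graph :: "'a set \<Rightarrow> ('a \<Rightarrow> 'a \<Rightarrow> bool) \<Rightarrow> bool" where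
  "graph V E \<longleftrightarrow> finite V \<and> (\<forall>x y. E x y \<longrightarrow> x \<in> V \<and> y \<in> V)
     \<and> (\<forall>x y. E x y \<longrightarrow> E y x) \<and> (\<forall>x. \<not> E x x)"

definition triangle_free :: "'a set \<Rightarrow> ('a \<Rightarrow> 'a \<Rightarrow> bool) \<Rightarrow> bool" where
  "triangle_free V E \<longleftrightarrow>
     \<not> (\<exists>x\<in>V. \<exists>y\<in>V. \<exists>z\<in>V. E x y \<and> E y z \<and> E x z)"

definition maximal_triangle_free :: "'a set \<Rightarrow> ('a \<Rightarrow> 'a \<Rightarrow> bool) \<Rightarrow> bool" where
  "maximal_triangle_free V E \<longleftrightarrow> graph V E \<and> triangle_free V E \<and>
     (\<forall>x\<in>V. \<forall>y\<in>V. x \<noteq> y \<and> \<not> E x y \<longrightarrow> (\<exists>z\<in>V. E x z \<and> E z y))"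

definition property_D :: "nat \<Rightarrow> 'a set \<Rightarrow> ('a \<Rightarrow> 'a \<Rightarrow> bool) \<Rightarrow> bool" where
  "property_D k V E \<longleftrightarrow>
     (\<forall>m \<in> {1..k}. \<forall>x :: nat \<Rightarrow> 'a. (\<forall>i < 3*m. x i \<in> V) \<longrightarrow>
        (\<exists>y\<in>V. card {i \<in> {..<3*m}. E (x i) y} \<ge> m + 1))"

definition has_induced_C6 :: "'a set \<Rightarrow> ('a \<Rightarrow> 'a \<Rightarrow> bool) \<Rightarrow> bool" where
  "has_induced_C6 V E \<longleftrightarrow> (\<exists>v :: nat \<Rightarrow> 'a.
     (\<forall>i<6. v i \<in> V) \<and> inj_on v {..<6} \<and>
     (\<forall>i<6. \<forall>j<6. E (v i) (v j) \<longleftrightarrow> (j = (i + 1) mod 6 \<or> i = (j + 1) mod 6)))"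

text \<open>Mycielski-Groetzsch graph: vertices a_j, b_j (j in Z/5, represented by 0..4) and c.\<close>
datatype mg_vertex = MA nat | MB nat | MC

definition mg_verts :: "mg_vertex set" where
  "mg_verts = MA ` {..<5} \<union> MB ` {..<5} \<union> {MC}"

fun mg_edge0 :: "mg_vertex \<Rightarrow> mg_vertex \<Rightarrow> bool" where
  "mg_edge0 (MA j) MC = True"
| "mg_edge0 (MA j) (MB k) = (k = (j + 2) mod 5 \<or> j = (k + 2) mod 5)"
| "mg_edge0 (MB j) (MB k) = (k = (j + 2) mod 5)"
| "mg_edge0 _ _ = False"

definition mg_edge :: "mg_vertex \<Rightarrow> mg_vertex \<Rightarrow> bool" where
  "mg_edge u v \<longleftrightarrow> u \<in> mg_verts \<and> v \<in> mg_verts \<and> (mg_edge0 u v \<or> mg_edge0 v u)"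

definition contains_MG :: "'a set \<Rightarrow> ('a \<Rightarrow> 'a \<Rightarrow> bool) \<Rightarrow> bool" where
  "contains_MG V E \<longleftrightarrow> (\<exists>f :: mg_vertex \<Rightarrow> 'a.
     inj_on f mg_verts \<and> f ` mg_verts \<subseteq> V \<and>
     (\<forall>u\<in>mg_verts. \<forall>w\<in>mg_verts. mg_edge u w \<longrightarrow> E (f u) (f w)))"

end

theory Submission imports Defs begin

lemma mg_verts_eq: "mg_verts = {MA 0, MA 1, MA 2, MA 3, MA 4, MB 0, MB 1, MB 2, MB 3, MB 4, MC}"
  by (auto simp: mg_verts_def lessThan_nat_numeral)

lemma mg_intro:
  assumes V: "a0 \<in> V" "a1 \<in> V" "a2 \<in> V" "a3 \<in> V" "a4 \<in> V" "b0 \<in> V" "b1 \<in> V" "b2 \<in> V" "b3 \<in> V" "b4 \<in> V" "c \<in> V"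
  and d: "distinct [a0,a1,a2,a3,a4,b0,b1,b2,b3,b4,c]"
  and sym: "\<And>a b. E a b \<Longrightarrow> E b a"
  and e: "E a0 c" "E a1 c" "E a2 c" "E a3 c" "E a4 c"
     "E a0 b2" "E a0 b3" "E a1 b3" "E a1 b4" "E a2 b4" "E a2 b0" "E a3 b0" "E a3 b1" "E a4 b1" "E a4 b2"
     "E b0 b2" "E b1 b3" "E b2 b4" "E b3 b0" "E b4 b1"
  shows "contains_MG V E"
proof -
  define f where "f = (\<lambda>w. case w of MA n \<Rightarrow> [a0,a1,a2,a3,a4] ! n | MB n \<Rightarrow> [b0,b1,b2,b3,b4] ! n | MC \<Rightarrow> c)"
  have "inj_on f mg_verts" using d unfolding mg_verts_eq inj_on_def f_def by auto
  moreover have "f ` mg_verts \<subseteq> V" using V unfolding mg_verts_eq f_def by auto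
  moreover have "\<forall>u\<in>mg_verts. \<forall>w\<in>mg_verts. mg_edge u w \<longrightarrow> E (f u) (f w)"
    unfolding mg_edge_def mg_verts_eq f_def using e sym by auto
  ultimately show ?thesis unfolding contains_MG_def by blast
qed

lemma final1:
  assumes V: "v0 \<in> V" "v1 \<in> V" "v2 \<in> V" "v3 \<in> V" "v4 \<in> V" "v5 \<in> V" "x \<in> V" "p \<in> V" "q \<in> V" "r \<in> V" "y \<in> V"
  and sym: "\<And>a b. E a b \<Longrightarrow> E b a" and irr: "\<And>a. \<not> E a a"
  and tf: "\<And>a b c. E a b \<Longrightarrow> E b c \<Longrightarrow> E a c \<Longrightarrow> False"
  and e: "E v0 v1" "E v1 v2" "E v2 v3" "E v3 v4" "E v4 v5" "E v5 v0" "E x v1" "E x v3" "E x v5" "E p v0" "E p v3" "E q v2" "E q v5" "E r v1" "E r v4" "E p q" "E p r" "E y v1" "E y v4" "E y q"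
  and ne: "\<not> E v0 v2" "\<not> E v0 v3" "\<not> E v0 v4" "\<not> E v1 v3" "\<not> E v1 v4" "\<not> E v1 v5" "\<not> E v2 v4" "\<not> E v2 v5" "\<not> E v3 v5"
  shows "contains_MG V E"
proof -
  have d0: "v0 \<noteq> x" by (metis e(8) ne(2))
  have d1: "v0 \<noteq> v2" by (metis e(3) ne(2))
  have d2: "v0 \<noteq> y" by (metis e(19) ne(3))
  have d3: "v0 \<noteq> r" by (metis e(15) ne(3))
  have d4: "v0 \<noteq> q" by (metis e(12) ne(1))
  have d5: "v0 \<noteq> v4" by (metis sym[OF e(4)] ne(2))
  have d6: "v0 \<noteq> p" by (metis irr sym[OF e(10)])
  have d7: "v0 \<noteq> v5" by (metis irr sym[OF e(6)])
  have d8: "v0 \<noteq> v3" by (metis sym[OF e(3)] ne(1))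
  have d9: "v0 \<noteq> v1" by (metis irr e(1))
  have d10: "x \<noteq> v2" by (metis e(9) ne(8))
  have d11: "x \<noteq> y" by (metis tf e(9) sym[OF e(13)] e(20))
  have d12: "x \<noteq> r" by (metis tf e(9) sym[OF e(5)] e(15))
  have d13: "x \<noteq> q" by (metis tf e(7) sym[OF e(18)] sym[OF e(20)])
  have d14: "x \<noteq> v4" by (metis sym[OF e(7)] ne(5))
  have d15: "x \<noteq> p" by (metis tf e(7) sym[OF e(14)] e(17))
  have d16: "x \<noteq> v5" by (metis irr e(9))
  have d17: "x \<noteq> v3" by (metis irr e(8))
  have d18: "x \<noteq> v1" by (metis irr e(7))
  have d19: "v2 \<noteq> y" by (metis e(19) ne(7))
  have d20: "v2 \<noteq> r" by (metis e(15) ne(7))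
  have d21: "v2 \<noteq> q" by (metis irr sym[OF e(12)])
  have d22: "v2 \<noteq> v4" by (metis e(2) ne(5))
  have d23: "v2 \<noteq> p" by (metis sym[OF e(10)] ne(1))
  have d24: "v2 \<noteq> v5" by (metis sym[OF e(6)] ne(1))
  have d25: "v2 \<noteq> v3" by (metis irr e(3))
  have d26: "v2 \<noteq> v1" by (metis irr sym[OF e(2)])
  have d27: "y \<noteq> r" by (metis tf e(20) sym[OF e(16)] sym[OF e(17)])
  have d28: "y \<noteq> q" by (metis irr e(20))
  have d29: "y \<noteq> v4" by (metis irr e(19))
  have d30: "y \<noteq> p" by (metis tf e(18) sym[OF e(14)] e(17))
  have d31: "y \<noteq> v5" by (metis sym[OF e(18)] ne(6))
  have d32: "y \<noteq> v3" by (metis sym[OF e(18)] ne(4))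
  have d33: "y \<noteq> v1" by (metis irr e(18))
  have d34: "r \<noteq> q" by (metis tf e(14) sym[OF e(18)] sym[OF e(20)])
  have d35: "r \<noteq> v4" by (metis irr e(15))
  have d36: "r \<noteq> p" by (metis irr sym[OF e(17)])
  have d37: "r \<noteq> v5" by (metis sym[OF e(14)] ne(6))
  have d38: "r \<noteq> v3" by (metis sym[OF e(14)] ne(4))
  have d39: "r \<noteq> v1" by (metis irr e(14))
  have d40: "q \<noteq> v4" by (metis sym[OF e(12)] ne(7))
  have d41: "q \<noteq> p" by (metis irr sym[OF e(16)])
  have d42: "q \<noteq> v5" by (metis irr e(13))
  have d43: "q \<noteq> v3" by (metis e(13) ne(9))
  have d44: "q \<noteq> v1" by (metis e(13) ne(6))
  have d45: "v4 \<noteq> p" by (metis sym[OF e(10)] ne(3))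
  have d46: "v4 \<noteq> v5" by (metis irr e(5))
  have d47: "v4 \<noteq> v3" by (metis irr sym[OF e(4)])
  have d48: "v4 \<noteq> v1" by (metis e(1) ne(3))
  have d49: "p \<noteq> v5" by (metis sym[OF e(11)] ne(9))
  have d50: "p \<noteq> v3" by (metis irr e(11))
  have d51: "p \<noteq> v1" by (metis e(11) ne(4))
  have d52: "v5 \<noteq> v3" by (metis sym[OF e(6)] ne(2))
  have d53: "v5 \<noteq> v1" by (metis sym[OF e(5)] ne(5))
  have d54: "v3 \<noteq> v1" by (metis e(1) ne(2))
  have D: "distinct [v0, x, v2, y, r, q, v4, p, v5, v3, v1]" using d0 d1 d2 d3 d4 d5 d6 d7 d8 d9 d10 d11 d12 d13 d14 d15 d16 d17 d18 d19 d20 d21 d22 d23 d24 d25 d26 d27 d28 d29 d30 d31 d32 d33 d34 d35 d36 d37 d38 d39 d40 d41 d42 d43 d44 d45 d46 d47 d48 d49 d50 d51 d52 d53 d54 by simp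
  show ?thesis
    by (rule mg_intro[OF V(1) V(7) V(3) V(11) V(10) V(9) V(5) V(8) V(6) V(4) V(2) D sym]) (use e sym in auto)
qed

lemma final2:
  assumes V: "v0 \<in> V" "v1 \<in> V" "v2 \<in> V" "v3 \<in> V" "v4 \<in> V" "v5 \<in> V" "x \<in> V" "p \<in> V" "q \<in> V" "r \<in> V" "y \<in> V"
  and sym: "\<And>a b. E a b \<Longrightarrow> E b a" and irr: "\<And>a. \<not> E a a"
  and tf: "\<And>a b c. E a b \<Longrightarrow> E b c \<Longrightarrow> E a c \<Longrightarrow> False"
  and e: "E v0 v1" "E v1 v2" "E v2 v3" "E v3 v4" "E v4 v5" "E v5 v0" "E x v1" "E x v3" "E x v5" "E p v0" "E p v3" "E q v2" "E q v5" "E r v1" "E r v4" "E p q" "E p r" "E y v2" "E y v5" "E y r"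
  and ne: "\<not> E v0 v2" "\<not> E v0 v3" "\<not> E v0 v4" "\<not> E v1 v3" "\<not> E v1 v4" "\<not> E v1 v5" "\<not> E v2 v4" "\<not> E v2 v5" "\<not> E v3 v5"
  shows "contains_MG V E"
proof -
  have d0: "v0 \<noteq> x" by (metis e(8) ne(2))
  have d1: "v0 \<noteq> v4" by (metis sym[OF e(4)] ne(2))
  have d2: "v0 \<noteq> y" by (metis e(18) ne(1))
  have d3: "v0 \<noteq> q" by (metis e(12) ne(1))
  have d4: "v0 \<noteq> r" by (metis e(15) ne(3))
  have d5: "v0 \<noteq> v2" by (metis e(3) ne(2))
  have d6: "v0 \<noteq> p" by (metis irr sym[OF e(10)])
  have d7: "v0 \<noteq> v1" by (metis irr e(1))
  have d8: "v0 \<noteq> v3" by (metis sym[OF e(3)] ne(1))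
  have d9: "v0 \<noteq> v5" by (metis irr sym[OF e(6)])
  have d10: "x \<noteq> v4" by (metis sym[OF e(7)] ne(5))
  have d11: "x \<noteq> y" by (metis tf e(7) sym[OF e(14)] e(20))
  have d12: "x \<noteq> q" by (metis tf e(7) e(2) e(12))
  have d13: "x \<noteq> r" by (metis tf e(9) sym[OF e(19)] sym[OF e(20)])
  have d14: "x \<noteq> v2" by (metis e(9) ne(8))
  have d15: "x \<noteq> p" by (metis tf e(7) sym[OF e(14)] e(17))
  have d16: "x \<noteq> v1" by (metis irr e(7))
  have d17: "x \<noteq> v3" by (metis irr e(8))
  have d18: "x \<noteq> v5" by (metis irr e(9))
  have d19: "v4 \<noteq> y" by (metis sym[OF e(18)] ne(7))
  have d20: "v4 \<noteq> q" by (metis sym[OF e(12)] ne(7))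
  have d21: "v4 \<noteq> r" by (metis irr sym[OF e(15)])
  have d22: "v4 \<noteq> v2" by (metis e(2) ne(5))
  have d23: "v4 \<noteq> p" by (metis sym[OF e(10)] ne(3))
  have d24: "v4 \<noteq> v1" by (metis e(1) ne(3))
  have d25: "v4 \<noteq> v3" by (metis irr sym[OF e(4)])
  have d26: "v4 \<noteq> v5" by (metis irr e(5))
  have d27: "y \<noteq> q" by (metis tf e(20) sym[OF e(17)] sym[OF e(16)])
  have d28: "y \<noteq> r" by (metis irr e(20))
  have d29: "y \<noteq> v2" by (metis irr e(18))
  have d30: "y \<noteq> p" by (metis tf e(19) sym[OF e(13)] e(16))
  have d31: "y \<noteq> v1" by (metis e(19) ne(6))
  have d32: "y \<noteq> v3" by (metis e(19) ne(9))
  have d33: "y \<noteq> v5" by (metis irr e(19))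
  have d34: "q \<noteq> r" by (metis tf e(13) sym[OF e(19)] sym[OF e(20)])
  have d35: "q \<noteq> v2" by (metis irr e(12))
  have d36: "q \<noteq> p" by (metis irr sym[OF e(16)])
  have d37: "q \<noteq> v1" by (metis e(13) ne(6))
  have d38: "q \<noteq> v3" by (metis e(13) ne(9))
  have d39: "q \<noteq> v5" by (metis irr e(13))
  have d40: "r \<noteq> v2" by (metis e(15) ne(7))
  have d41: "r \<noteq> p" by (metis irr sym[OF e(17)])
  have d42: "r \<noteq> v1" by (metis irr e(14))
  have d43: "r \<noteq> v3" by (metis sym[OF e(14)] ne(4))
  have d44: "r \<noteq> v5" by (metis sym[OF e(14)] ne(6))
  have d45: "v2 \<noteq> p" by (metis sym[OF e(10)] ne(1))
  have d46: "v2 \<noteq> v1" by (metis irr sym[OF e(2)])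
  have d47: "v2 \<noteq> v3" by (metis irr e(3))
  have d48: "v2 \<noteq> v5" by (metis sym[OF e(6)] ne(1))
  have d49: "p \<noteq> v1" by (metis e(11) ne(4))
  have d50: "p \<noteq> v3" by (metis irr e(11))
  have d51: "p \<noteq> v5" by (metis sym[OF e(11)] ne(9))
  have d52: "v1 \<noteq> v3" by (metis e(1) ne(2))
  have d53: "v1 \<noteq> v5" by (metis sym[OF e(5)] ne(5))
  have d54: "v3 \<noteq> v5" by (metis sym[OF e(6)] ne(2))
  have D: "distinct [v0, x, v4, y, q, r, v2, p, v1, v3, v5]" using d0 d1 d2 d3 d4 d5 d6 d7 d8 d9 d10 d11 d12 d13 d14 d15 d16 d17 d18 d19 d20 d21 d22 d23 d24 d25 d26 d27 d28 d29 d30 d31 d32 d33 d34 d35 d36 d37 d38 d39 d40 d41 d42 d43 d44 d45 d46 d47 d48 d49 d50 d51 d52 d53 d54 by simp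
  show ?thesis
    by (rule mg_intro[OF V(1) V(7) V(5) V(11) V(9) V(10) V(3) V(8) V(2) V(4) V(6) D sym]) (use e sym in auto)
qed

lemma cardS: "card {i\<in>{..<Suc n}. P i} = card {i\<in>{..<n}. P i} + (if P n then 1 else 0)"
proof -
  have "{i\<in>{..<Suc n}. P i} = (if P n then insert n {i\<in>{..<n}. P i} else {i\<in>{..<n}. P i})"
    by (auto simp: less_Suc_eq)
  then show ?thesis by simp
qed

lemma cardS2: "card {i. i < Suc n \<and> P i} = card {i. i < n \<and> P i} + (if P n then 1 else 0)"
  using cardS[of n P] by simp

lemma card0: "card {i. i = (0::nat) \<and> P i} = (if P 0 then 1 else 0)"
proof -
  have "{i. i = (0::nat) \<and> P i} = (if P 0 then {0} else {})" by auto
  then show ?thesis by simp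
qed

lemma D2:
  assumes "property_D 3 V E" "a0 \<in> V" "a1 \<in> V" "a2 \<in> V" "a3 \<in> V" "a4 \<in> V" "a5 \<in> V"
  shows "\<exists>y\<in>V. 3 \<le> (if E a0 y then 1 else 0) + (if E a1 y then 1 else 0) + (if E a2 y then 1 else 0)
     + (if E a3 y then 1 else 0) + (if E a4 y then 1 else 0) + (if E a5 y then (1::nat) else 0)"
proof -
  let ?x = "\<lambda>i. [a0,a1,a2,a3,a4,a5] ! i"
  have "\<forall>i<3*2. ?x i \<in> V" using assms by (auto simp: less_Suc_eq numeral_eq_Suc)
  moreover have "(2::nat) \<in> {1..3}" by simp
  ultimately obtain y where yV: "y \<in> V" and c1: "card {i \<in> {..<3*2}. E (?x i) y} \<ge> 2 + 1"
    using assms(1) unfolding property_D_def by blast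
  have c2: "card {i \<in> {..<3*2}. E (?x i) y} = (if E a0 y then 1 else 0) + (if E a1 y then 1 else 0) + (if E a2 y then 1 else 0)
     + (if E a3 y then 1 else 0) + (if E a4 y then 1 else 0) + (if E a5 y then (1::nat) else 0)"
    by (simp add: cardS2 card0 numeral_eq_Suc)
  have "3 \<le> (if E a0 y then 1 else 0) + (if E a1 y then 1 else 0) + (if E a2 y then 1 else 0)
     + (if E a3 y then 1 else 0) + (if E a4 y then 1 else 0) + (if E a5 y then (1::nat) else 0)"
    using c1 unfolding c2 by simp
  then show ?thesis using yV by blast
qed

lemma D3:
  assumes "property_D 3 V E" "a0 \<in> V" "a1 \<in> V" "a2 \<in> V" "a3 \<in> V" "a4 \<in> V" "a5 \<in> V" "a6 \<in> V" "a7 \<in> V" "a8 \<in> V"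
  shows "\<exists>y\<in>V. 4 \<le> (if E a0 y then 1 else 0) + (if E a1 y then 1 else 0) + (if E a2 y then 1 else 0)
     + (if E a3 y then 1 else 0) + (if E a4 y then 1 else 0) + (if E a5 y then 1 else 0)
     + (if E a6 y then 1 else 0) + (if E a7 y then 1 else 0) + (if E a8 y then (1::nat) else 0)"
proof -
  let ?x = "\<lambda>i. [a0,a1,a2,a3,a4,a5,a6,a7,a8] ! i"
  have "\<forall>i<3*3. ?x i \<in> V" using assms by (auto simp: less_Suc_eq numeral_eq_Suc)
  moreover have "(3::nat) \<in> {1..3}" by simp
  ultimately obtain y where yV: "y \<in> V" and c1: "card {i \<in> {..<3*3}. E (?x i) y} \<ge> 3 + 1"
    using assms(1) unfolding property_D_def by blast
  have c2: "card {i \<in> {..<3*3}. E (?x i) y} = (if E a0 y then 1 else 0) + (if E a1 y then 1 else 0) + (if E a2 y then 1 else 0)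
     + (if E a3 y then 1 else 0) + (if E a4 y then 1 else 0) + (if E a5 y then 1 else 0)
     + (if E a6 y then 1 else 0) + (if E a7 y then 1 else 0) + (if E a8 y then (1::nat) else 0)"
    by (simp add: cardS2 card0 numeral_eq_Suc)
  have "4 \<le> (if E a0 y then 1 else 0) + (if E a1 y then 1 else 0) + (if E a2 y then 1 else 0)
     + (if E a3 y then 1 else 0) + (if E a4 y then 1 else 0) + (if E a5 y then 1 else 0)
     + (if E a6 y then 1 else 0) + (if E a7 y then 1 else 0) + (if E a8 y then (1::nat) else 0)"
    using c1 unfolding c2 by simp
  then show ?thesis using yV by blast
qed

lemma nsym: "(\<And>a b. E a b \<Longrightarrow> E b a) \<Longrightarrow> \<not> E a b \<Longrightarrow> \<not> E b a" by blast

lemma path: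
  assumes V: "v0 \<in> V" "v1 \<in> V" "v2 \<in> V" "v3 \<in> V" "v4 \<in> V" "v5 \<in> V" "x \<in> V" "p \<in> V" "q \<in> V" "r \<in> V"
  and sym: "\<And>a b. E a b \<Longrightarrow> E b a" and irr: "\<And>a. \<not> E a a"
  and tf: "\<And>a b c. E a b \<Longrightarrow> E b c \<Longrightarrow> E a c \<Longrightarrow> False"
  and e: "E v0 v1" "E v1 v2" "E v2 v3" "E v3 v4" "E v4 v5" "E v5 v0" "E x v1" "E x v3" "E x v5" "E p v0" "E p v3" "E q v2" "E q v5" "E r v1" "E r v4" "E p q" "E p r"
  and ne: "\<not> E v0 v2" "\<not> E v0 v3" "\<not> E v0 v4" "\<not> E v1 v3" "\<not> E v1 v4" "\<not> E v1 v5" "\<not> E v2 v4" "\<not> E v2 v5" "\<not> E v3 v5"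
  and D: "property_D 3 V E"
  shows "contains_MG V E"
proof -
  obtain y where yV: "y \<in> V" and c: "(3::nat) \<le> (if E v1 y then 1 else 0) + (if E v2 y then 1 else 0) + (if E v4 y then 1 else 0) + (if E v5 y then 1 else 0) + (if E q y then 1 else 0) + (if E r y then 1 else 0)" using D2[OF D V(2) V(3) V(5) V(6) V(9) V(10)] by blast
  have n0: "\<not> (E v1 y \<and> E v2 y)" using tf[OF e(2), of y] sym by blast
  have n1: "\<not> (E v4 y \<and> E v5 y)" using tf[OF e(5), of y] sym by blast
  have n2: "\<not> (E q y \<and> E v2 y)" using tf[OF e(12), of y] sym by blast
  have n3: "\<not> (E q y \<and> E v5 y)" using tf[OF e(13), of y] sym by blast
  have n4: "\<not> (E r y \<and> E v1 y)" using tf[OF e(14), of y] sym by blast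
  have n5: "\<not> (E r y \<and> E v4 y)" using tf[OF e(15), of y] sym by blast
  have "(E v1 y \<and> E v4 y \<and> E q y) \<or> (E v2 y \<and> E v5 y \<and> E r y)" using c n0 n1 n2 n3 n4 n5 by (auto split: if_splits)
  then show ?thesis
  proof (elim disjE conjE)
    assume h: "E v1 y" "E v4 y" "E q y"
    show ?thesis by (rule final1[OF V(1) V(2) V(3) V(4) V(5) V(6) V(7) V(8) V(9) V(10) yV sym irr tf e(1) e(2) e(3) e(4) e(5) e(6) e(7) e(8) e(9) e(10) e(11) e(12) e(13) e(14) e(15) e(16) e(17) sym[OF h(1)] sym[OF h(2)] sym[OF h(3)] ne(1) ne(2) ne(3) ne(4) ne(5) ne(6) ne(7) ne(8) ne(9)])
  next
    assume h: "E v2 y" "E v5 y" "E r y"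
    show ?thesis by (rule final2[OF V(1) V(2) V(3) V(4) V(5) V(6) V(7) V(8) V(9) V(10) yV sym irr tf e(1) e(2) e(3) e(4) e(5) e(6) e(7) e(8) e(9) e(10) e(11) e(12) e(13) e(14) e(15) e(16) e(17) sym[OF h(1)] sym[OF h(2)] sym[OF h(3)] ne(1) ne(2) ne(3) ne(4) ne(5) ne(6) ne(7) ne(8) ne(9)])
  qed
qed

lemma pqr:
  assumes V: "v0 \<in> V" "v1 \<in> V" "v2 \<in> V" "v3 \<in> V" "v4 \<in> V" "v5 \<in> V" "x \<in> V" "p \<in> V" "q \<in> V" "r \<in> V"
  and sym: "\<And>a b. E a b \<Longrightarrow> E b a" and irr: "\<And>a. \<not> E a a"
  and tf: "\<And>a b c. E a b \<Longrightarrow> E b c \<Longrightarrow> E a c \<Longrightarrow> False"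
  and e: "E v0 v1" "E v1 v2" "E v2 v3" "E v3 v4" "E v4 v5" "E v5 v0" "E x v1" "E x v3" "E x v5" "E p v0" "E p v3" "E q v2" "E q v5" "E r v1" "E r v4"
  and ne: "\<not> E v0 v2" "\<not> E v0 v3" "\<not> E v0 v4" "\<not> E v1 v3" "\<not> E v1 v4" "\<not> E v1 v5" "\<not> E v2 v4" "\<not> E v2 v5" "\<not> E v3 v5"
  and D: "property_D 3 V E"
  shows "contains_MG V E"
proof -
  obtain y where yV: "y \<in> V" and c: "(4::nat) \<le> (if E v0 y then 1 else 0) + (if E v1 y then 1 else 0) + (if E v2 y then 1 else 0) + (if E v3 y then 1 else 0) + (if E v4 y then 1 else 0) + (if E v5 y then 1 else 0) + (if E p y then 1 else 0) + (if E q y then 1 else 0) + (if E r y then 1 else 0)" using D3[OF D V(1) V(2) V(3) V(4) V(5) V(6) V(8) V(9) V(10)] by blast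
  have n0: "\<not> (E v0 y \<and> E v1 y)" using tf[OF e(1), of y] sym by blast
  have n1: "\<not> (E v0 y \<and> E v5 y)" using tf[OF sym[OF e(6)], of y] sym by blast
  have n2: "\<not> (E v1 y \<and> E v2 y)" using tf[OF e(2), of y] sym by blast
  have n3: "\<not> (E v2 y \<and> E v3 y)" using tf[OF e(3), of y] sym by blast
  have n4: "\<not> (E v3 y \<and> E v4 y)" using tf[OF e(4), of y] sym by blast
  have n5: "\<not> (E v4 y \<and> E v5 y)" using tf[OF e(5), of y] sym by blast
  have n6: "\<not> (E p y \<and> E v0 y)" using tf[OF e(10), of y] sym by blast
  have n7: "\<not> (E p y \<and> E v3 y)" using tf[OF e(11), of y] sym by blast
  have n8: "\<not> (E q y \<and> E v2 y)" using tf[OF e(12), of y] sym by blast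
  have n9: "\<not> (E q y \<and> E v5 y)" using tf[OF e(13), of y] sym by blast
  have n10: "\<not> (E r y \<and> E v1 y)" using tf[OF e(14), of y] sym by blast
  have n11: "\<not> (E r y \<and> E v4 y)" using tf[OF e(15), of y] sym by blast
  have "(E v0 y \<and> E v3 y \<and> E q y \<and> E r y) \<or> (E v2 y \<and> E v5 y \<and> E p y \<and> E r y) \<or> (E v1 y \<and> E v4 y \<and> E p y \<and> E q y)" using c n0 n1 n2 n3 n4 n5 n6 n7 n8 n9 n10 n11 by (auto split: if_splits)
  then show ?thesis
  proof (elim disjE conjE)
    assume h: "E v0 y" "E v3 y" "E q y" "E r y"
    show ?thesis by (rule path[OF V(1) V(2) V(3) V(4) V(5) V(6) V(7) yV V(9) V(10) sym irr tf e(1) e(2) e(3) e(4) e(5) e(6) e(7) e(8) e(9) sym[OF h(1)] sym[OF h(2)] e(12) e(13) e(14) e(15) sym[OF h(3)] sym[OF h(4)] ne(1) ne(2) ne(3) ne(4) ne(5) ne(6) ne(7) ne(8) ne(9) D])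
  next
    assume h: "E v2 y" "E v5 y" "E p y" "E r y"
    show ?thesis by (rule path[OF V(3) V(4) V(5) V(6) V(1) V(2) V(7) yV V(10) V(8) sym irr tf e(3) e(4) e(5) e(6) e(1) e(2) e(8) e(9) e(7) sym[OF h(1)] sym[OF h(2)] e(15) e(14) e(11) e(10) sym[OF h(4)] sym[OF h(3)] ne(7) ne(8) nsym[of E, OF sym ne(1)] ne(9) nsym[of E, OF sym ne(2)] nsym[of E, OF sym ne(4)] nsym[of E, OF sym ne(3)] nsym[of E, OF sym ne(5)] nsym[of E, OF sym ne(6)] D])
  next
    assume h: "E v1 y" "E v4 y" "E p y" "E q y"
    show ?thesis by (rule path[OF V(5) V(6) V(1) V(2) V(3) V(4) V(7) yV V(8) V(9) sym irr tf e(5) e(6) e(1) e(2) e(3) e(4) e(9) e(7) e(8) sym[OF h(2)] sym[OF h(1)] e(10) e(11) e(13) e(12) sym[OF h(3)] sym[OF h(4)] nsym[of E, OF sym ne(3)] nsym[of E, OF sym ne(5)] nsym[of E, OF sym ne(7)] nsym[of E, OF sym ne(6)] nsym[of E, OF sym ne(8)] nsym[of E, OF sym ne(9)] ne(1) ne(2) ne(4) D])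
  qed
qed

lemma stage2:
  assumes V: "v0 \<in> V" "v1 \<in> V" "v2 \<in> V" "v3 \<in> V" "v4 \<in> V" "v5 \<in> V" "x \<in> V"
  and sym: "\<And>a b. E a b \<Longrightarrow> E b a" and irr: "\<And>a. \<not> E a a"
  and tf: "\<And>a b c. E a b \<Longrightarrow> E b c \<Longrightarrow> E a c \<Longrightarrow> False"
  and e: "E v0 v1" "E v1 v2" "E v2 v3" "E v3 v4" "E v4 v5" "E v5 v0" "E x v1" "E x v3" "E x v5"
  and ne: "\<not> E v0 v2" "\<not> E v0 v3" "\<not> E v0 v4" "\<not> E v1 v3" "\<not> E v1 v4" "\<not> E v1 v5" "\<not> E v2 v4" "\<not> E v2 v5" "\<not> E v3 v5"
  and D: "property_D 3 V E"
  and mx: "\<And>a b. a \<in> V \<Longrightarrow> b \<in> V \<Longrightarrow> a \<noteq> b \<Longrightarrow> \<not> E a b \<Longrightarrow> \<exists>z\<in>V. E a z \<and> E z b"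
  shows "contains_MG V E"
proof -
  have "v0 \<noteq> v3" by (metis e(1) nsym[of E, OF sym ne(4)])
  then obtain p where pV: "p \<in> V" and p1: "E v0 p" and p2: "E p v3" using mx[OF V(1) V(4) _ ne(2)] by blast
  have "v2 \<noteq> v5" by (metis sym[OF e(2)] nsym[of E, OF sym ne(6)])
  then obtain q where qV: "q \<in> V" and q1: "E v2 q" and q2: "E q v5" using mx[OF V(3) V(6) _ ne(8)] by blast
  have "v1 \<noteq> v4" by (metis sym[OF e(1)] nsym[of E, OF sym ne(3)])
  then obtain r where rV: "r \<in> V" and r1: "E v1 r" and r2: "E r v4" using mx[OF V(2) V(5) _ ne(5)] by blast
  show ?thesis by (rule pqr[OF V(1) V(2) V(3) V(4) V(5) V(6) V(7) pV qV rV sym irr tf e(1) e(2) e(3) e(4) e(5) e(6) e(7) e(8) e(9) sym[OF p1] p2 sym[OF q1] q2 sym[OF r1] r2 ne(1) ne(2) ne(3) ne(4) ne(5) ne(6) ne(7) ne(8) ne(9) D])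
qed

theorem lemma3p1:
  fixes V :: "'a set" and E :: "'a \<Rightarrow> 'a \<Rightarrow> bool"
  assumes "maximal_triangle_free V E"
    and "property_D 3 V E"
    and "has_induced_C6 V E"
  shows "contains_MG V E"
proof -
  have D: "property_D 3 V E" by fact
  have gr: "graph V E" and tfr: "triangle_free V E"
    and mx: "\<And>a b. a \<in> V \<Longrightarrow> b \<in> V \<Longrightarrow> a \<noteq> b \<Longrightarrow> \<not> E a b \<Longrightarrow> \<exists>z\<in>V. E a z \<and> E z b"
    using assms(1) unfolding maximal_triangle_free_def by blast+
  have sym: "\<And>a b. E a b \<Longrightarrow> E b a" and irr: "\<And>a. \<not> E a a" and inV: "\<And>a b. E a b \<Longrightarrow> a \<in> V \<and> b \<in> V"
    using gr unfolding graph_def by blast+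
  have tf: "\<And>a b c. E a b \<Longrightarrow> E b c \<Longrightarrow> E a c \<Longrightarrow> False"
    using tfr inV unfolding triangle_free_def by blast
  obtain v :: "nat \<Rightarrow> 'a" where vV: "\<forall>i<6. v i \<in> V"
    and vE: "\<forall>i<6. \<forall>j<6. E (v i) (v j) \<longleftrightarrow> (j = (i + 1) mod 6 \<or> i = (j + 1) mod 6)"
    using assms(3) unfolding has_induced_C6_def by blast
  define v0 where "v0 = v 0"
  define v1 where "v1 = v 1"
  define v2 where "v2 = v 2"
  define v3 where "v3 = v 3"
  define v4 where "v4 = v 4"
  define v5 where "v5 = v 5"
  have V: "v0 \<in> V" "v1 \<in> V" "v2 \<in> V" "v3 \<in> V" "v4 \<in> V" "v5 \<in> V"
    using vV unfolding v0_def v1_def v2_def v3_def v4_def v5_def by auto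
  have e: "E v0 v1" "E v1 v2" "E v2 v3" "E v3 v4" "E v4 v5" "E v5 v0"
    using vE unfolding v0_def v1_def v2_def v3_def v4_def v5_def by auto
  have ne: "\<not> E v0 v2" "\<not> E v0 v3" "\<not> E v0 v4" "\<not> E v1 v3" "\<not> E v1 v4" "\<not> E v1 v5" "\<not> E v2 v4" "\<not> E v2 v5" "\<not> E v3 v5"
    using vE unfolding v0_def v1_def v2_def v3_def v4_def v5_def by auto
  obtain y where yV: "y \<in> V" and c: "(3::nat) \<le> (if E v0 y then 1 else 0) + (if E v1 y then 1 else 0) + (if E v2 y then 1 else 0) + (if E v3 y then 1 else 0) + (if E v4 y then 1 else 0) + (if E v5 y then 1 else 0)" using D2[OF D V] by blast
  have n0: "\<not> (E v0 y \<and> E v1 y)" using tf[OF e(1), of y] sym by blast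
  have n1: "\<not> (E v0 y \<and> E v5 y)" using tf[OF sym[OF e(6)], of y] sym by blast
  have n2: "\<not> (E v1 y \<and> E v2 y)" using tf[OF e(2), of y] sym by blast
  have n3: "\<not> (E v2 y \<and> E v3 y)" using tf[OF e(3), of y] sym by blast
  have n4: "\<not> (E v3 y \<and> E v4 y)" using tf[OF e(4), of y] sym by blast
  have n5: "\<not> (E v4 y \<and> E v5 y)" using tf[OF e(5), of y] sym by blast
  have "(E v1 y \<and> E v3 y \<and> E v5 y) \<or> (E v0 y \<and> E v2 y \<and> E v4 y)" using c n0 n1 n2 n3 n4 n5 by (auto split: if_splits)
  then show ?thesis
  proof (elim disjE conjE)
    assume h: "E v1 y" "E v3 y" "E v5 y"
    show ?thesis by (rule stage2[OF V(1) V(2) V(3) V(4) V(5) V(6) yV sym irr tf e(1) e(2) e(3) e(4) e(5) e(6) sym[OF h(1)] sym[OF h(2)] sym[OF h(3)] ne(1) ne(2) ne(3) ne(4) ne(5) ne(6) ne(7) ne(8) ne(9) D mx])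
  next
    assume h: "E v0 y" "E v2 y" "E v4 y"
    show ?thesis by (rule stage2[OF V(2) V(3) V(4) V(5) V(6) V(1) yV sym irr tf e(2) e(3) e(4) e(5) e(6) e(1) sym[OF h(2)] sym[OF h(3)] sym[OF h(1)] ne(4) ne(5) ne(6) ne(7) ne(8) nsym[of E, OF sym ne(1)] ne(9) nsym[of E, OF sym ne(2)] nsym[of E, OF sym ne(3)] D mx])
  qed
qed

end
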